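(* Let $(\lambda,\mu,\nu,b,c)$ be a compatible tower with $\nu=(\nu_1,\dots,\nu_r)$. Let \[ \lambda'=\Big\langle\bigcup_{i=1}^r(\nu_i+b_i)\Big\rangle,\qquad \mu'=\Big\langle\bigcup_{i=1}^r(\nu_i+c_i)\Big\rangle . \] Then $(\lambda',\mu',\nu,b,c)$ is a compatible scaffolded tower, and $(\lambda',\mu',\nu,b,c)\le(\lambda,\mu,\nu,b,c)$.
   Context: $\mathbb{N}^3$ carries the componentwise partial order. A $3$-dimensional Young diagram is a finite down-closed subset of $\mathbb{N}^3$. A tower is a triple $(\lambda,\nu,b)$ with $\lambda$ a $3$-dimensional Young diagram, $\nu=(\nu_1,\dots,\nu_r)$ with $\nu_i=\{(0,0,z): z\in\mathbb{N}, 0\le z<n_i\}$ ($n_i\ge1$), $b_i\in\mathbb{Z}^3$, such that the $\nu_i+b_i$ are pairwise disjoint subsets of $\lambda$ and, for all $w\in\mathbb{N}^3$ and $v_i\in\nu_i$ with $v_i+b_i+w\in\lambda$, $v_i+w\in\nu_i$. A compatible tower $(\lambda,\mu,\nu,b,c)$ is one where $(\lambda,\nu,b)$ and $(\mu,\nu,c)$ are towers. For $T\subseteq\mathbb{N}^3$, its order ideal is $\langle T\rangle=\{p\in\mathbb{N}^3: p\le t \text{ for some } t\in T\}$. A tower $(\lambda,\nu,b)$ is scaffolded if $\lambda=\langle\bigcup_i(\nu_i+b_i)\rangle$; a compatible tower is scaffolded if both $(\lambda,\nu,b)$ and $(\mu,\nu,c)$ are. Partial order on compatible towers: $(\lambda,\mu,\nu,b,c)\le(\lambda',\mu',\nu',b',c')$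 if $\lambda\subseteq\lambda'$, $\mu\subseteq\mu'$, writing $\nu=(\nu_i)_{i\in I}$ and $\nu'=(\nu'_j)_{j\in J}$ there is an injection $\iota\colon I\to J$ with $\nu_i\subseteq\nu'_{\iota(i)}$, and $|\lambda\cap\mu|-|\nu|\le|\lambda'\cap\mu'|-|\nu'|$, where $|\nu|=\sum_i|\nu_i|$. *)

theory Defs
  imports Main
begin

type_synonym pt = "nat \<times> nat \<times> nat"
type_synonym ipt = "int \<times> int \<times> int"

fun le3 :: "pt \<Rightarrow> pt \<Rightarrow> bool" where
  "le3 (a1,a2,a3) (b1,b2,b3) \<longleftrightarrow> a1 \<le> b1 \<and> a2 \<le> b2 \<and> a3 \<le> b3"

fun le3z :: "ipt \<Rightarrow> ipt \<Rightarrow> bool" where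
  "le3z (a1,a2,a3) (b1,b2,b3) \<longleftrightarrow> a1 \<le> b1 \<and> a2 \<le> b2 \<and> a3 \<le> b3"

fun emb :: "pt \<Rightarrow> ipt" where
  "emb (x,y,z) = (int x, int y, int z)"

fun addz :: "ipt \<Rightarrow> ipt \<Rightarrow> ipt" where
  "addz (a1,a2,a3) (b1,b2,b3) = (a1+b1, a2+b2, a3+b3)"

definition young :: "pt set \<Rightarrow> bool" where
  "young L \<longleftrightarrow> finite L \<and> (\<forall>p q. q \<in> L \<longrightarrow> le3 p q \<longrightarrow> p \<in> L)"

definition col :: "nat \<Rightarrow> pt set" where
  "col n = {(0,0,z) | z. z < n}"

definition shift :: "pt set \<Rightarrow> ipt \<Rightarrow> ipt set" where
  "shift S b = (\<lambda>v. addz (emb v) b) ` S"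

definition tower :: "pt set \<Rightarrow> pt set list \<Rightarrow> ipt list \<Rightarrow> bool" where
  "tower L \<nu> b \<longleftrightarrow> young L \<and> length b = length \<nu> \<and>
     (\<forall>i<length \<nu>. \<exists>n\<ge>1. \<nu>!i = col n) \<and>
     (\<forall>i<length \<nu>. \<forall>j<length \<nu>. i \<noteq> j \<longrightarrow> shift (\<nu>!i) (b!i) \<inter> shift (\<nu>!j) (b!j) = {}) \<and>
     (\<forall>i<length \<nu>. shift (\<nu>!i) (b!i) \<subseteq> emb ` L) \<and>
     (\<forall>i<length \<nu>. \<forall>w v. v \<in> \<nu>!i \<longrightarrow> addz (addz (emb v) (b!i)) (emb w) \<in> emb ` L
         \<longrightarrow> addz (emb v) (emb w) \<in> emb ` (\<nu>!i))"

definition compatible_tower :: "pt set \<Rightarrow> pt set \<Rightarrow> pt set list \<Rightarrow> ipt list \<Rightarrow> ipt list \<Rightarrow> bool" where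
  "compatible_tower L M \<nu> b c \<longleftrightarrow> tower L \<nu> b \<and> tower M \<nu> c"

definition ideal :: "ipt set \<Rightarrow> pt set" where
  "ideal T = {p. \<exists>t\<in>T. le3z (emb p) t}"

definition scaffolded :: "pt set \<Rightarrow> pt set list \<Rightarrow> ipt list \<Rightarrow> bool" where
  "scaffolded L \<nu> b \<longleftrightarrow> tower L \<nu> b \<and> L = ideal (\<Union>i<length \<nu>. shift (\<nu>!i) (b!i))"

definition compatible_scaffolded :: "pt set \<Rightarrow> pt set \<Rightarrow> pt set list \<Rightarrow> ipt list \<Rightarrow> ipt list \<Rightarrow> bool" where
  "compatible_scaffolded L M \<nu> b c \<longleftrightarrow>
     compatible_tower L M \<nu> b c \<and> scaffolded L \<nu> b \<and> scaffolded M \<nu> c"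

definition nu_size :: "pt set list \<Rightarrow> nat" where
  "nu_size \<nu> = (\<Sum>i<length \<nu>. card (\<nu>!i))"

definition ct_le :: "pt set \<Rightarrow> pt set \<Rightarrow> pt set list \<Rightarrow> ipt list \<Rightarrow> ipt list \<Rightarrow>
                     pt set \<Rightarrow> pt set \<Rightarrow> pt set list \<Rightarrow> ipt list \<Rightarrow> ipt list \<Rightarrow> bool" where
  "ct_le L M \<nu> b c L' M' \<nu>' b' c' \<longleftrightarrow> L \<subseteq> L' \<and> M \<subseteq> M' \<and>
     (\<exists>\<iota>. inj_on \<iota> {..<length \<nu>} \<and> \<iota> ` {..<length \<nu>} \<subseteq> {..<length \<nu>'} \<and>
          (\<forall>i<length \<nu>. \<nu>!i \<subseteq> \<nu>'!(\<iota> i))) \<and>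
     int (card (L \<inter> M)) - int (nu_size \<nu>) \<le> int (card (L' \<inter> M')) - int (nu_size \<nu>')"

end

theory Submission
  imports Defs
begin

lemma le3z_emb: "le3z (emb p) (emb q) = le3 p q"
  by (cases p; cases q) auto

lemma le3z_trans: "le3z a b \<Longrightarrow> le3z b c \<Longrightarrow> le3z a c"
  by (cases a; cases b; cases c) auto

lemma le3z_refl: "le3z a a"
  by (cases a) auto

lemma ideal_sub:
  assumes "tower L \<nu> b"
  shows "ideal (\<Union>i<length \<nu>. shift (\<nu>!i) (b!i)) \<subseteq> L"
proof
  fix p assume "p \<in> ideal (\<Union>i<length \<nu>. shift (\<nu>!i) (b!i))"
  then obtain i t where i: "i < length \<nu>" and t: "t \<in> shift (\<nu>!i) (b!i)" and le: "le3z (emb p) t"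
    unfolding ideal_def by blast
  have "t \<in> emb ` L" using assms i t unfolding tower_def by blast
  then obtain q where q: "q \<in> L" "t = emb q" by blast
  have "le3 p q" using le q le3z_emb by simp
  then show "p \<in> L" using assms q unfolding tower_def young_def by blast
qed

lemma tower_ideal:
  assumes T: "tower L \<nu> b"
  shows "tower (ideal (\<Union>i<length \<nu>. shift (\<nu>!i) (b!i))) \<nu> b"
proof -
  let ?L = "ideal (\<Union>i<length \<nu>. shift (\<nu>!i) (b!i))"
  have sub: "?L \<subseteq> L" using ideal_sub[OF T] .
  have "finite L" using T by (simp add: tower_def young_def)
  then have fin: "finite ?L" using sub finite_subset by blast
  have dc: "\<forall>p q. q \<in> ?L \<longrightarrow> le3 p q \<longrightarrow> p \<in> ?L"
  proof (intro allI impI)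
    fix p q assume "q \<in> ?L" "le3 p q"
    then obtain t where t: "t \<in> (\<Union>i<length \<nu>. shift (\<nu>!i) (b!i))" "le3z (emb q) t"
      unfolding ideal_def by blast
    have "le3z (emb p) (emb q)" using \<open>le3 p q\<close> le3z_emb by simp
    then have "le3z (emb p) t" using t(2) le3z_trans by blast
    then show "p \<in> ?L" unfolding ideal_def using t(1) by blast
  qed
  have sh: "\<forall>i<length \<nu>. shift (\<nu>!i) (b!i) \<subseteq> emb ` ?L"
  proof (intro allI impI subsetI)
    fix i t assume i: "i < length \<nu>" and t: "t \<in> shift (\<nu>!i) (b!i)"
    have "t \<in> emb ` L" using T i t unfolding tower_def by blast
    then obtain q where q: "t = emb q" by blast
    have "q \<in> ?L" unfolding ideal_def using i t q le3z_refl by blast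
    then show "t \<in> emb ` ?L" using q by blast
  qed
  have E: "emb ` ?L \<subseteq> emb ` L" using sub by blast
  have A: "\<forall>i<length \<nu>. \<forall>w v. v \<in> \<nu>!i \<longrightarrow> addz (addz (emb v) (b!i)) (emb w) \<in> emb ` L
         \<longrightarrow> addz (emb v) (emb w) \<in> emb ` (\<nu>!i)" using T unfolding tower_def by simp
  have "\<forall>i<length \<nu>. \<forall>w v. v \<in> \<nu>!i \<longrightarrow> addz (addz (emb v) (b!i)) (emb w) \<in> emb ` ?L
         \<longrightarrow> addz (emb v) (emb w) \<in> emb ` (\<nu>!i)"
  proof (intro allI impI)
    fix i w v assume "i < length \<nu>" "v \<in> \<nu>!i" "addz (addz (emb v) (b!i)) (emb w) \<in> emb ` ?L"
    then show "addz (emb v) (emb w) \<in> emb ` (\<nu>!i)" using A E by blast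
  qed
  then show ?thesis using T fin dc sh unfolding tower_def young_def by simp
qed

theorem lemma3p1:
  fixes L M :: "pt set" and \<nu> :: "pt set list" and b c :: "ipt list"
  assumes "compatible_tower L M \<nu> b c"
    and "L' = ideal (\<Union>i<length \<nu>. shift (\<nu>!i) (b!i))"
    and "M' = ideal (\<Union>i<length \<nu>. shift (\<nu>!i) (c!i))"
  shows "compatible_scaffolded L' M' \<nu> b c \<and> ct_le L' M' \<nu> b c L M \<nu> b c"
proof -
  have TL: "tower L \<nu> b" and TM: "tower M \<nu> c" using assms(1) unfolding compatible_tower_def by auto
  have T1: "tower L' \<nu> b" using tower_ideal[OF TL] assms(2) by simp
  have T2: "tower M' \<nu> c" using tower_ideal[OF TM] assms(3) by simp
  have S1: "L' \<subseteq> L" using ideal_sub[OF TL] assms(2) by simp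
  have S2: "M' \<subseteq> M" using ideal_sub[OF TM] assms(3) by simp
  have "finite L" using TL by (simp add: tower_def young_def)
  then have fin: "finite (L \<inter> M)" by simp
  have "card (L' \<inter> M') \<le> card (L \<inter> M)" using S1 S2 fin by (intro card_mono) auto
  then have C: "int (card (L' \<inter> M')) - int (nu_size \<nu>) \<le> int (card (L \<inter> M)) - int (nu_size \<nu>)"
    by simp
  have I: "\<exists>\<iota>. inj_on \<iota> {..<length \<nu>} \<and> \<iota> ` {..<length \<nu>} \<subseteq> {..<length \<nu>} \<and>
          (\<forall>i<length \<nu>. \<nu>!i \<subseteq> \<nu>!(\<iota> i))"
    by (rule exI[of _ id]) auto
  show ?thesis
    unfolding compatible_scaffolded_def ct_le_def compatible_tower_def scaffolded_def
    using T1 T2 S1 S2 C I assms(2,3) by simp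
qed

end
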